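(* Identify $\mathbb{S}^2$ with $\mathbb{C}\cup\{\infty\}$ and $\mathbb{C}^2$ with $\mathbb{R}^4$, and define $f:\mathbb{S}^2\to\mathbb{C}^2$ by $$f(z)=\left(\bar z\,\frac{|z|^4-1}{|z|^6+1},\; z^2\,\frac{|z|^2+1}{|z|^6+1}\right).$$ Then $f(\mathbb{S}^2)$ is the Veronese surface, up to a conformal transformation of $\mathbb{R}^4$.
   Context: The Veronese surface in $\mathbb{R}^4$ is the image (under stereographic projection $\mathbb{S}^4\setminus\{pt\}\to\mathbb{R}^4$) of the Veronese embedding of $\mathbb{R}P^2$ into $\mathbb{S}^4\subset\mathbb{R}^5$, $[x,y,z]\mapsto\big(\sqrt3\, yz,\sqrt3\, xz,\sqrt3\, xy,\tfrac{\sqrt3}{2}(x^2-y^2),\tfrac12(x^2+y^2-2z^2)\big)$ for $x^2+y^2+z^2=1$; "up to conformal transformation" means the surfaces agree after applying some conformal (Möbius) transformation of $\mathbb{R}^4\cup\{\infty\}$. The map $f$ extends continuously to $z=\infty$. *)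

theory Defs
  imports "HOL-Analysis.Analysis"
begin

text \<open>The one-point compactification \<open>'a \<union> {\<infinity>}\<close> is modelled by \<open>'a option\<close>,
  with \<open>None\<close> playing the role of the point at infinity.\<close>

definition unit_inversion_ext :: "'a::real_normed_vector option \<Rightarrow> 'a option" where
  "unit_inversion_ext p =
     (case p of None \<Rightarrow> Some 0
      | Some x \<Rightarrow> if x = 0 then None else Some (x /\<^sub>R (norm x)\<^sup>2))"

text \<open>Conformal (Moebius) transformations of \<open>'a \<union> {\<infinity>}\<close>: the group generated
  by similarities \<open>x \<mapsto> c A x + b\<close> (A orthogonal, c > 0, fixing \<infinity>) and the
  inversion in the unit sphere.\<close>
inductive_set moebius_ext :: "('a::euclidean_space option \<Rightarrow> 'a option) set" where
  identity: "id \<in> moebius_ext"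
| similarity: "\<lbrakk>orthogonal_transformation A; c > 0; g \<in> moebius_ext\<rbrakk>
      \<Longrightarrow> map_option (\<lambda>x. c *\<^sub>R A x + b) \<circ> g \<in> moebius_ext"
| inversion: "g \<in> moebius_ext \<Longrightarrow> unit_inversion_ext \<circ> g \<in> moebius_ext"

definition f_fin :: "complex \<Rightarrow> complex \<times> complex" where
  "f_fin z =
     (cnj z * complex_of_real ((cmod z ^ 4 - 1) / (cmod z ^ 6 + 1)),
      z\<^sup>2 * complex_of_real ((cmod z ^ 2 + 1) / (cmod z ^ 6 + 1)))"

definition f_map :: "complex option \<Rightarrow> complex \<times> complex" where
  "f_map p = (case p of None \<Rightarrow> Lim at_infinity f_fin | Some z \<Rightarrow> f_fin z)"

text \<open>Veronese embedding of \<open>S\<^sup>2 \<subseteq> \<real>\<^sup>3\<close> (hence of \<open>\<real>P\<^sup>2\<close>) into \<open>S\<^sup>4 \<subseteq> \<real>\<^sup>5\<close>.\<close>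
definition veronese_S4 :: "real \<Rightarrow> real \<Rightarrow> real \<Rightarrow> real \<times> real \<times> real \<times> real \<times> real" where
  "veronese_S4 x y z =
     (sqrt 3 * y * z, sqrt 3 * x * z, sqrt 3 * x * y,
      sqrt 3 / 2 * (x\<^sup>2 - y\<^sup>2), 1/2 * (x\<^sup>2 + y\<^sup>2 - 2 * z\<^sup>2))"

text \<open>Stereographic projection \<open>S\<^sup>4 \ {e\<^sub>5} \<rightarrow> \<real>\<^sup>4\<close> from the north pole
  \<open>e\<^sub>5 = (0,0,0,0,1)\<close>, with \<open>\<real>\<^sup>4\<close> identified with \<open>\<complex>\<^sup>2\<close> via
  \<open>(u\<^sub>1,u\<^sub>2,u\<^sub>3,u\<^sub>4) \<mapsto> (u\<^sub>1 + i u\<^sub>2, u\<^sub>3 + i u\<^sub>4)\<close>.\<close>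
definition stereo_S4 :: "real \<times> real \<times> real \<times> real \<times> real \<Rightarrow> complex \<times> complex" where
  "stereo_S4 u = (case u of (u1, u2, u3, u4, u5) \<Rightarrow>
     (Complex (u1 / (1 - u5)) (u2 / (1 - u5)), Complex (u3 / (1 - u5)) (u4 / (1 - u5))))"

definition veronese_surface :: "(complex \<times> complex) set" where
  "veronese_surface =
     {stereo_S4 (veronese_S4 x y z) | x y z. x\<^sup>2 + y\<^sup>2 + z\<^sup>2 = 1}"

end

theory Submission
  imports Defs
begin

definition A3 :: "complex \<times> complex \<Rightarrow> complex \<times> complex" where
  "A3 p = (\<i> * fst p, \<i> * cnj (snd p))"

lemma A3_orth: "orthogonal_transformation A3"
proof -
  have "linear A3"
    by (rule linearI) (auto simp: A3_def algebra_simps complex_eq_iff)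
  moreover have "norm (A3 v) = norm v" for v
    by (cases v) (simp add: A3_def norm_Pair norm_mult)
  ultimately show ?thesis by (simp add: orthogonal_transformation)
qed

lemma cmod_pows:
  fixes a b :: real
  shows "cmod (Complex a b) ^ 2 = a\<^sup>2 + b\<^sup>2"
    "cmod (Complex a b) ^ 4 = (a\<^sup>2 + b\<^sup>2)^2"
    "cmod (Complex a b) ^ 6 = (a\<^sup>2 + b\<^sup>2)^3"
proof -
  show 1: "cmod (Complex a b) ^ 2 = a\<^sup>2 + b\<^sup>2" by (simp add: cmod_power2)
  show "cmod (Complex a b) ^ 4 = (a\<^sup>2 + b\<^sup>2)^2"
  proof -
    have "cmod (Complex a b) ^ 4 = (cmod (Complex a b) ^ 2)^2" by algebra
    then show ?thesis using 1 by simp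
  qed
  show "cmod (Complex a b) ^ 6 = (a\<^sup>2 + b\<^sup>2)^3"
  proof -
    have "cmod (Complex a b) ^ 6 = (cmod (Complex a b) ^ 2)^3" by algebra
    then show ?thesis using 1 by simp
  qed
qed

definition gmap :: "complex \<times> complex \<Rightarrow> complex \<times> complex" where
  "gmap p = sqrt 3 *\<^sub>R A3 p + 0"

lemma key:
  fixes a b :: real
  defines "r \<equiv> a\<^sup>2 + b\<^sup>2"
  shows "gmap (f_fin (Complex a b)) =
     stereo_S4 (veronese_S4 (2*a/(1+r)) (2*b/(1+r)) ((r-1)/(1+r)))"
proof -
  have r0: "r \<ge> 0" unfolding r_def by simp
  define d where "d = r\<^sup>2 - r + 1"
  define p where "p = 1 + r"
  have p0: "p > 0" using r0 unfolding p_def by simp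
  have dd: "d = (r - 1/2)^2 + 3/4" unfolding d_def power2_eq_square by (simp add: field_simps)
  have "(r - 1/2)^2 \<ge> 0" by simp
  then have d0: "d > 0" using dd by linarith
  have r3: "r^3 + 1 = p*d" unfolding d_def p_def by algebra
  have rp: "r + 1 = p" "1 + r = p" unfolding p_def by simp_all
  have r3': "1 + r^3 = p*d" using r3 by simp
  have r21: "r\<^sup>2 - 1 = (r - 1) * p" unfolding p_def by algebra
  have xy: "(2*a/p)\<^sup>2 + (2*b/p)\<^sup>2 = 4*r/p^2"
    unfolding r_def by (simp add: power_divide power_mult_distrib add_divide_distrib)
  have zz: "((r-1)/p)\<^sup>2 = (r-1)^2/p^2" by (simp add: power_divide)
  have u5: "1 - 1/2 * ((2*a/p)\<^sup>2 + (2*b/p)\<^sup>2 - 2 * ((r-1)/p)\<^sup>2) = 2*d/p^2"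
    unfolding xy zz using p0
    by (simp add: field_simps) (unfold d_def p_def, algebra)
  show ?thesis
    unfolding gmap_def A3_def f_fin_def stereo_S4_def veronese_S4_def cmod_pows r_def[symmetric]
    unfolding p_def[symmetric]
    apply (simp only: u5 prod.case)
    apply (simp add: prod_eq_iff complex_eq_iff)
    using p0 d0
    apply (simp add: r3 r3' rp r21 power2_eq_square field_simps)
    apply (unfold p_def, algebra)
    done
qed

lemma norm_f_fin:
  assumes s1: "cmod w \<ge> 1"
  shows "norm (f_fin w) \<le> 3 / cmod w"
proof -
  define s where "s = cmod w"
  have s0: "s \<ge> 1" using s1 s_def by simp
  have p6: "s^6 + 1 > 0" using s0 by (smt (verit) zero_le_power)
  have s4: "s^4 \<ge> 1" using s0 by (simp add: one_le_power)
  have n1: "norm (fst (f_fin w)) = s * (s^4 - 1) / (s^6 + 1)"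
  proof -
    have "norm (fst (f_fin w)) = cmod (cnj w) * \<bar>(s^4 - 1) / (s^6 + 1)\<bar>"
      unfolding f_fin_def s_def[symmetric] by (simp only: fst_conv norm_mult norm_of_real)
    then show ?thesis using s4 p6 by (simp add: s_def)
  qed
  have n2: "norm (snd (f_fin w)) = s^2 * (s^2 + 1) / (s^6 + 1)"
  proof -
    have "norm (snd (f_fin w)) = cmod w ^ 2 * \<bar>(s^2 + 1) / (s^6 + 1)\<bar>"
      unfolding f_fin_def by (simp only: snd_conv norm_mult norm_of_real norm_power s_def)
    moreover have "\<bar>(s^2 + 1) / (s^6 + 1)\<bar> = (s^2 + 1) / (s^6 + 1)"
      using p6 by (intro abs_of_nonneg) (simp add: add_nonneg_nonneg)
    ultimately show ?thesis by (simp add: s_def)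
  qed
  have e1: "s * (s^4 - 1) / (s^6 + 1) \<le> 1 / s"
  proof -
    have eq: "s * (s * (s^4 - 1)) = s^6 - s^2" by algebra
    have "s^2 \<ge> 0" by simp
    then have "s * (s * (s^4 - 1)) \<le> s^6 + 1" by (subst eq) (smt (verit))
    then show ?thesis using p6 s0 by (simp add: field_simps)
  qed
  have a5: "s^5 \<le> s^6" "s^3 \<le> s^6" using s0 by (simp_all add: power_increasing)
  have e2: "s^2 * (s^2 + 1) / (s^6 + 1) \<le> 2 / s"
  proof -
    have eq: "s * (s^2 * (s^2 + 1)) = s^5 + s^3" by algebra
    have "s * (s^2 * (s^2 + 1)) \<le> 2 * (s^6 + 1)" using a5 by (subst eq) (smt (verit))
    then show ?thesis using p6 s0 by (simp add: field_simps)
  qed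
  have "norm (f_fin w) \<le> norm (fst (f_fin w)) + norm (snd (f_fin w))"
    by (metis norm_Pair_le prod.collapse)
  also have "\<dots> \<le> 1/s + 2/s" using n1 n2 e1 e2 by linarith
  finally show ?thesis unfolding s_def by simp
qed

lemma f_fin_lim: "(f_fin \<longlongrightarrow> 0) at_infinity"
proof (rule Lim_null_comparison)
  show "\<forall>\<^sub>F x in at_infinity. norm (f_fin x) \<le> 3 / cmod x"
    using eventually_at_infinity norm_f_fin by blast
  show "((\<lambda>x. 3 / cmod x) \<longlongrightarrow> 0) at_infinity"
    by (rule tendsto_divide_0[OF tendsto_const filterlim_norm_at_top[THEN filterlim_at_top_imp_at_infinity]])
qed

lemma f_map_inf: "f_map None = 0"
  unfolding f_map_def using tendsto_Lim[OF trivial_limit_at_infinity f_fin_lim] by simp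

lemma f_fin_0: "f_fin 0 = 0"
  unfolding f_fin_def by (simp add: zero_prod_def)

lemma range_f_map: "f_map ` UNIV = range f_fin"
proof -
  have "f_map ` UNIV = f_map ` ({None} \<union> range Some)"
    by (metis UNIV_option_conv image_insert insert_is_Un)
  also have "\<dots> = insert 0 (range f_fin)"
    by (auto simp: f_map_inf f_map_def[of "Some _"] image_image)
  also have "\<dots> = range f_fin" using f_fin_0 by (metis insert_absorb rangeI)
  finally show ?thesis .
qed

lemma sphere:
  fixes a b :: real
  defines "r \<equiv> a\<^sup>2 + b\<^sup>2"
  shows "(2*a/(1+r))\<^sup>2 + (2*b/(1+r))\<^sup>2 + ((r-1)/(1+r))\<^sup>2 = 1"
proof -
  have r0: "1 + r > 0" unfolding r_def by (smt (verit) zero_le_power2)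
  then show ?thesis unfolding r_def by (simp add: field_simps) algebra
qed

lemma preimage:
  fixes x y z :: real
  assumes s: "x\<^sup>2 + y\<^sup>2 + z\<^sup>2 = 1"
  shows "stereo_S4 (veronese_S4 x y z) \<in> gmap ` range f_fin"
proof (cases "z = 1")
  case True
  then have "x\<^sup>2 + y\<^sup>2 = 0" using s by simp
  moreover have "x\<^sup>2 \<ge> 0" "y\<^sup>2 \<ge> 0" by simp_all
  ultimately have "x\<^sup>2 = 0" "y\<^sup>2 = 0" by linarith+
  then have "x = 0" "y = 0" by simp_all
  then have "stereo_S4 (veronese_S4 x y z) = gmap (f_fin (Complex 0 0))"
    using True by (simp add: key veronese_S4_def)
  then show ?thesis by blast
next
  case False
  have z1: "1 - z \<noteq> 0" using False by simp
  define a where "a = x / (1 - z)"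
  define b where "b = y / (1 - z)"
  define r where "r = a\<^sup>2 + b\<^sup>2"
  have "r = (x\<^sup>2 + y\<^sup>2) / (1 - z)^2" unfolding r_def a_def b_def by (simp add: power_divide add_divide_distrib)
  also have "x\<^sup>2 + y\<^sup>2 = (1 - z) * (1 + z)" using s by algebra
  finally have rz: "r = (1 + z) / (1 - z)" using z1 by (simp add: power2_eq_square)
  then have r1: "1 + r = 2 / (1 - z)" using z1 by (simp add: field_simps)
  have rm: "r - 1 = 2 * z / (1 - z)" using rz z1 by (simp add: field_simps)
  have "2*a/(1+r) = x" "2*b/(1+r) = y" "(r-1)/(1+r) = z"
    unfolding r1 rm a_def b_def using z1 by (simp_all add: field_simps)
  then have "stereo_S4 (veronese_S4 x y z) = gmap (f_fin (Complex a b))"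
    using key[of a b] unfolding r_def by simp
  then show ?thesis by blast
qed

lemma gmap_range: "gmap ` range f_fin = veronese_surface"
proof
  show "gmap ` range f_fin \<subseteq> veronese_surface"
  proof -
    have "gmap (f_fin w) \<in> veronese_surface" for w
    proof -
      obtain a b where w: "w = Complex a b" by (metis complex.collapse)
      show ?thesis
        unfolding veronese_surface_def w key using sphere by blast
    qed
    then show ?thesis by blast
  qed
  show "veronese_surface \<subseteq> gmap ` range f_fin"
    unfolding veronese_surface_def using preimage by blast
qed

theorem proposition1p3:
  shows "\<exists>\<phi> \<in> moebius_ext. \<phi> ` (Some ` (f_map ` UNIV)) = Some ` veronese_surface"
proof
  let ?\<phi> = "map_option (\<lambda>x. sqrt 3 *\<^sub>R A3 x + 0) \<circ> id"
  show "?\<phi> \<in> moebius_ext"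
    by (rule moebius_ext.similarity[OF A3_orth _ moebius_ext.identity]) simp
  have "?\<phi> ` (Some ` (f_map ` UNIV)) = Some ` (gmap ` (f_map ` UNIV))"
    by (auto simp: image_image gmap_def)
  then show "?\<phi> ` (Some ` (f_map ` UNIV)) = Some ` veronese_surface"
    using range_f_map gmap_range by simp
qed

end
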